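(* Let $d\ge3$, let $\mathcal{H}_A=\mathcal{H}_B=\mathbb{C}^d$ with fixed orthonormal bases, and $\mathcal{H}=\mathcal{H}_A\otimes\mathcal{H}_B$. None of the Werner states $\rho_W(t)=1-tF$ with $t\in(1/d,1/2]$ is $2$-distillable if and only if $$\|X\otimes U+Y\otimes V\|^2-\tfrac12\|X^TU+Y^TV\|^2-\tfrac12\|UX^T+VY^T\|^2+\tfrac14|\operatorname{tr}(X^TU+Y^TV)|^2\ge0$$ for all $X,Y,U,V\in M_d(\mathbb{C})$.
   Context: The flip operator is $F=\sum_{i,j}|i,j\rangle\langle j,i|$ on $\mathcal{H}$; its partial transpose is $dP$ with $P=\frac1d\sum_{i,j}|i,i\rangle\langle j,j|$, so the partial transpose of $\rho_W(t)$ is $1-tdP$. A bipartite state $\rho$ on $\mathcal{H}$ is called $k$-distillable if there exists a (non-normalized) vector $|\psi\rangle\in\mathcal{H}^{\otimes k}$, regarded as a bipartite vector in $\mathcal{H}_A^{\otimes k}\otimes\mathcal{H}_B^{\otimes k}$, of Schmidt rank at most two such that $\langle\psi|\sigma^{\otimes k}|\psi\rangle<0$, where $\sigma=1\otimes T(\rho)$ is the partial transpose of $\rho$. $\|Z\|^2=\operatorname{tr}(Z^\dagger Z)$ is the Frobenius norm, and $A\otimes B=[a_{ij}B]$ for $A=[a_{ij}]$. *)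

theory Defs
  imports Complex_Main
begin

(* Operators on H = C^d (x) C^d are functions on index pairs (i,j), i,j < d:
   op a b = <a| op |b>.  Matrices in M_d(C) are functions nat => nat => complex,
   only entries with indices < d matter. *)

type_synonym bop = "nat \<times> nat \<Rightarrow> nat \<times> nat \<Rightarrow> complex"
type_synonym cmat = "nat \<Rightarrow> nat \<Rightarrow> complex"

definition flip :: bop where
  "flip = (\<lambda>(i, j) (k, l). if i = l \<and> j = k then 1 else 0)"

definition werner :: "real \<Rightarrow> bop" where
  "werner t = (\<lambda>a b. (if a = b then 1 else 0) - complex_of_real t * flip a b)"

definition ptrans :: "bop \<Rightarrow> bop" where
  "ptrans \<rho> = (\<lambda>(i, j) (k, l). \<rho> (i, l) (k, j))"

text \<open>Basis index set of H^(x)k: lists of k pairs (a_n, b_n) with a_n, b_n < d.\<close>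
definition idx :: "nat \<Rightarrow> nat \<Rightarrow> (nat \<times> nat) list set" where
  "idx d k = {xs. length xs = k \<and> set xs \<subseteq> {0..<d} \<times> {0..<d}}"

definition tensor_power_form :: "nat \<Rightarrow> nat \<Rightarrow> bop \<Rightarrow> ((nat \<times> nat) list \<Rightarrow> complex) \<Rightarrow> complex" where
  "tensor_power_form d k \<sigma> \<psi> =
     (\<Sum>x\<in>idx d k. \<Sum>y\<in>idx d k. cnj (\<psi> x) * (\<Prod>n<k. \<sigma> (x ! n) (y ! n)) * \<psi> y)"

text \<open>Schmidt rank at most r of psi regarded as a vector in H_A^(x)k (x) H_B^(x)k:
  psi is a sum of r product vectors alpha_m (x) beta_m (the A-index of basis vector x
  is map fst x, the B-index is map snd x).\<close>
definition schmidt_rank_le :: "nat \<Rightarrow> nat \<Rightarrow> nat \<Rightarrow> ((nat \<times> nat) list \<Rightarrow> complex) \<Rightarrow> bool" where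
  "schmidt_rank_le d k r \<psi> \<longleftrightarrow>
     (\<exists>\<alpha> \<beta> :: nat \<Rightarrow> nat list \<Rightarrow> complex.
        \<forall>x\<in>idx d k. \<psi> x = (\<Sum>m<r. \<alpha> m (map fst x) * \<beta> m (map snd x)))"

definition k_distillable :: "nat \<Rightarrow> nat \<Rightarrow> bop \<Rightarrow> bool" where
  "k_distillable d k \<rho> \<longleftrightarrow>
     (\<exists>\<psi>. schmidt_rank_le d k 2 \<psi> \<and>
        (let q = tensor_power_form d k (ptrans \<rho>) \<psi> in Im q = 0 \<and> Re q < 0))"

definition mtrans :: "cmat \<Rightarrow> cmat" where
  "mtrans X = (\<lambda>i j. X j i)"

definition mmult :: "nat \<Rightarrow> cmat \<Rightarrow> cmat \<Rightarrow> cmat" where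
  "mmult d X Y = (\<lambda>i j. \<Sum>m<d. X i m * Y m j)"

definition madd :: "cmat \<Rightarrow> cmat \<Rightarrow> cmat" where
  "madd X Y = (\<lambda>i j. X i j + Y i j)"

definition mtrace :: "nat \<Rightarrow> cmat \<Rightarrow> complex" where
  "mtrace d X = (\<Sum>i<d. X i i)"

definition frob_sq :: "nat \<Rightarrow> cmat \<Rightarrow> real" where
  "frob_sq d Z = (\<Sum>i<d. \<Sum>j<d. (cmod (Z i j))\<^sup>2)"

text \<open>Kronecker product A (x) B = [a_ij B] of d x d matrices, a d^2 x d^2 matrix
  with row index d*i+k and column index d*j+l.\<close>
definition kron :: "nat \<Rightarrow> cmat \<Rightarrow> cmat \<Rightarrow> cmat" where
  "kron d A B = (\<lambda>r c. A (r div d) (c div d) * B (r mod d) (c mod d))"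

end

theory Submission imports Defs begin

abbreviation SS :: "nat \<Rightarrow> (nat\<times>nat) set" where "SS d \<equiv> {..<d} \<times> {..<d}"

lemma sum_SS: "(\<Sum>p\<in>SS d. f p) = (\<Sum>a<d. \<Sum>b<d. f (a,b))"
  by (simp add: sum.cartesian_product)

lemma sum_diag: "(\<Sum>p\<in>SS d. (if fst p = snd p then f p else 0)) = (\<Sum>k<d. f (k,k))"
  unfolding sum_SS by simp

lemma idx2: "idx d 2 = (\<lambda>(p,q). [p,q]) ` (SS d \<times> SS d)"
  unfolding idx_def by (auto simp: numeral_2_eq_2 length_Suc_conv)

lemma sum_idx2: "(\<Sum>x\<in>idx d 2. f x) = (\<Sum>p\<in>SS d. \<Sum>q\<in>SS d. f [p,q])"
proof -
  have "inj_on (\<lambda>(p,q). [p,q]) (SS d \<times> SS d)" by (auto simp: inj_on_def)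
  then have "sum f ((\<lambda>(p,q). [p,q]) ` (SS d \<times> SS d)) = sum (f \<circ> (\<lambda>(p,q). [p,q])) (SS d \<times> SS d)"
    by (rule sum.reindex)
  then show ?thesis unfolding idx2 by (simp add: sum.cartesian_product split_def)
qed

lemma sig: "ptrans (werner t) p p' = (if p = p' then 1 else 0) - complex_of_real t * (if fst p = snd p \<and> fst p' = snd p' then 1 else 0)"
  by (cases p; cases p') (auto simp: ptrans_def werner_def flip_def)

lemma oneop: assumes "p \<in> SS d"
  shows "(\<Sum>p'\<in>SS d. ptrans (werner t) p p' * f p') = f p - complex_of_real t * (if fst p = snd p then 1 else 0) * (\<Sum>k<d. f (k,k))"
proof -
  have "(\<Sum>p'\<in>SS d. ptrans (werner t) p p' * f p') = (\<Sum>p'\<in>SS d. (if p = p' then f p' else 0)) - complex_of_real t * (if fst p = snd p then 1 else 0) * (\<Sum>p'\<in>SS d. (if fst p' = snd p' then f p' else 0))"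
  proof -
    have pw: "ptrans (werner t) p p' * f p' = (if p = p' then f p' else 0) - complex_of_real t * (if fst p = snd p then 1 else 0) * (if fst p' = snd p' then f p' else 0)" for p'
      by (simp add: sig algebra_simps)
    show ?thesis unfolding pw sum_subtractf sum_distrib_left[symmetric] by (simp add: mult.assoc)
  qed
  also have "\<dots> = f p - complex_of_real t * (if fst p = snd p then 1 else 0) * (\<Sum>k<d. f (k,k))"
    using assms by (simp only: sum_diag sum.delta finite_SigmaI finite_lessThan) simp
  finally show ?thesis .
qed

definition NN :: "nat \<Rightarrow> (nat\<times>nat \<Rightarrow> nat\<times>nat \<Rightarrow> complex) \<Rightarrow> real" where
  "NN d \<phi> = (\<Sum>p\<in>SS d. \<Sum>q\<in>SS d. (cmod (\<phi> p q))\<^sup>2)"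
definition B1 :: "nat \<Rightarrow> (nat\<times>nat \<Rightarrow> nat\<times>nat \<Rightarrow> complex) \<Rightarrow> real" where
  "B1 d \<phi> = (\<Sum>q\<in>SS d. (cmod (\<Sum>k<d. \<phi> (k,k) q))\<^sup>2)"
definition B2 :: "nat \<Rightarrow> (nat\<times>nat \<Rightarrow> nat\<times>nat \<Rightarrow> complex) \<Rightarrow> real" where
  "B2 d \<phi> = (\<Sum>p\<in>SS d. (cmod (\<Sum>k<d. \<phi> p (k,k)))\<^sup>2)"
definition CC :: "nat \<Rightarrow> (nat\<times>nat \<Rightarrow> nat\<times>nat \<Rightarrow> complex) \<Rightarrow> real" where
  "CC d \<phi> = (cmod (\<Sum>k<d. \<Sum>l<d. \<phi> (k,k) (l,l)))\<^sup>2"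

lemma key:
  assumes "\<And>p q. p \<in> SS d \<Longrightarrow> q \<in> SS d \<Longrightarrow> \<psi> [p,q] = \<phi> p q"
  shows "tensor_power_form d 2 (ptrans (werner t)) \<psi> = complex_of_real (NN d \<phi> - t * B1 d \<phi> - t * B2 d \<phi> + t\<^sup>2 * CC d \<phi>)"
proof -
  let ?s = "ptrans (werner t)"
  define I :: "nat\<times>nat \<Rightarrow> complex" where "I p = (if fst p = snd p then 1 else 0)" for p
  define s1 where "s1 q = (\<Sum>k<d. \<phi> (k,k) q)" for q
  define s2 where "s2 p = (\<Sum>k<d. \<phi> p (k,k))" for p
  define c where "c = (\<Sum>k<d. \<Sum>l<d. \<phi> (k,k) (l,l))"
  have 1: "tensor_power_form d 2 ?s \<psi> = (\<Sum>p\<in>SS d. \<Sum>q\<in>SS d. cnj (\<phi> p q) * (\<Sum>p'\<in>SS d. ?s p p' * (\<Sum>q'\<in>SS d. ?s q q' * \<phi> p' q')))"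
    unfolding tensor_power_form_def sum_idx2
    by (intro sum.cong refl) (simp add: assms numeral_2_eq_2 sum_distrib_left mult_ac)
  have inner: "(\<Sum>p'\<in>SS d. ?s p p' * (\<Sum>q'\<in>SS d. ?s q q' * \<phi> p' q')) =
      \<phi> p q - complex_of_real t * I q * s2 p - complex_of_real t * I p * s1 q + (complex_of_real t)\<^sup>2 * I p * I q * c"
    if "p \<in> SS d" "q \<in> SS d" for p q
  proof -
    have "(\<Sum>p'\<in>SS d. ?s p p' * (\<Sum>q'\<in>SS d. ?s q q' * \<phi> p' q')) =
       (\<Sum>p'\<in>SS d. ?s p p' * (\<phi> p' q - complex_of_real t * I q * s2 p'))"
      using that by (simp add: oneop I_def s2_def)
    also have "\<dots> = (\<phi> p q - complex_of_real t * I q * s2 p) - complex_of_real t * I p * (\<Sum>k<d. \<phi> (k,k) q - complex_of_real t * I q * s2 (k,k))"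
      using that by (subst oneop) (simp_all add: I_def)
    also have "\<dots> = \<phi> p q - complex_of_real t * I q * s2 p - complex_of_real t * I p * s1 q + (complex_of_real t)\<^sup>2 * I p * I q * c"
      by (simp add: s1_def s2_def c_def sum_subtractf sum_distrib_left[symmetric] algebra_simps power2_eq_square)
    finally show ?thesis .
  qed
  have 2: "tensor_power_form d 2 ?s \<psi> = (\<Sum>p\<in>SS d. \<Sum>q\<in>SS d. cnj (\<phi> p q) * \<phi> p q)
     - complex_of_real t * (\<Sum>p\<in>SS d. \<Sum>q\<in>SS d. cnj (\<phi> p q) * I q * s2 p)
     - complex_of_real t * (\<Sum>p\<in>SS d. \<Sum>q\<in>SS d. cnj (\<phi> p q) * I p * s1 q)
     + (complex_of_real t)\<^sup>2 * (\<Sum>p\<in>SS d. \<Sum>q\<in>SS d. cnj (\<phi> p q) * I p * I q * c)"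
  proof -
    have "tensor_power_form d 2 ?s \<psi> = (\<Sum>p\<in>SS d. \<Sum>q\<in>SS d. cnj (\<phi> p q) * (\<phi> p q - complex_of_real t * I q * s2 p - complex_of_real t * I p * s1 q + (complex_of_real t)\<^sup>2 * I p * I q * c))"
      unfolding 1 by (intro sum.cong refl) (simp add: inner)
    then show ?thesis
      by (simp add: distrib_left right_diff_distrib sum.distrib sum_subtractf sum_distrib_left mult_ac)
  qed
  have t1: "(\<Sum>p\<in>SS d. \<Sum>q\<in>SS d. cnj (\<phi> p q) * \<phi> p q) = complex_of_real (NN d \<phi>)"
    unfolding NN_def by (simp only: of_real_sum complex_norm_square) (simp add: mult.commute)
  have t2: "(\<Sum>p\<in>SS d. \<Sum>q\<in>SS d. cnj (\<phi> p q) * I q * s2 p) = complex_of_real (B2 d \<phi>)"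
  proof -
    have "(\<Sum>p\<in>SS d. \<Sum>q\<in>SS d. cnj (\<phi> p q) * I q * s2 p) = (\<Sum>p\<in>SS d. s2 p * (\<Sum>q\<in>SS d. if fst q = snd q then cnj (\<phi> p q) else 0))"
      by (auto simp: sum_distrib_left I_def intro!: sum.cong)
    also have "\<dots> = (\<Sum>p\<in>SS d. s2 p * cnj (s2 p))"
      by (simp only: sum_diag) (simp add: s2_def)
    finally show ?thesis unfolding B2_def of_real_sum complex_norm_square s2_def[symmetric] .
  qed
  have t3: "(\<Sum>p\<in>SS d. \<Sum>q\<in>SS d. cnj (\<phi> p q) * I p * s1 q) = complex_of_real (B1 d \<phi>)"
  proof -
    have "(\<Sum>p\<in>SS d. \<Sum>q\<in>SS d. cnj (\<phi> p q) * I p * s1 q) = (\<Sum>q\<in>SS d. s1 q * (\<Sum>p\<in>SS d. if fst p = snd p then cnj (\<phi> p q) else 0))"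
      by (subst sum.swap) (auto simp: sum_distrib_left I_def intro!: sum.cong)
    also have "\<dots> = (\<Sum>q\<in>SS d. s1 q * cnj (s1 q))"
      by (simp only: sum_diag) (simp add: s1_def)
    finally show ?thesis unfolding B1_def of_real_sum complex_norm_square s1_def[symmetric] .
  qed
  have t4: "(\<Sum>p\<in>SS d. \<Sum>q\<in>SS d. cnj (\<phi> p q) * I p * I q * c) = complex_of_real (CC d \<phi>)"
  proof -
    have "(\<Sum>p\<in>SS d. \<Sum>q\<in>SS d. cnj (\<phi> p q) * I p * I q * c) = c * (\<Sum>p\<in>SS d. if fst p = snd p then (\<Sum>q\<in>SS d. if fst q = snd q then cnj (\<phi> p q) else 0) else 0)"
      by (auto simp: sum_distrib_left I_def intro!: sum.cong)
    also have "\<dots> = c * cnj c"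
      by (simp only: sum_diag) (simp add: c_def)
    finally show ?thesis unfolding CC_def of_real_sum complex_norm_square c_def[symmetric] .
  qed
  show ?thesis unfolding 2 t1 t2 t3 t4 by simp
qed

lemma sum_dd: fixes d :: nat assumes "0 < d" shows "(\<Sum>r<d*d. f r) = (\<Sum>a<d. \<Sum>b<d. f (d*a+b))"
proof -
  have aux: "a = a' \<and> b = b'" if "b < d" "b' < d" "d*a+b = d*a'+b'" for a b a' b'
  proof -
    have e: "(d*a+b) div d = (d*a'+b') div d" "(d*a+b) mod d = (d*a'+b') mod d" by (simp_all only: that(3))
    have f: "(d*a+b) div d = a" "(d*a'+b') div d = a'" "(d*a+b) mod d = b" "(d*a'+b') mod d = b'"
      using that(1,2) assms by simp_all
    from e[unfolded f] show ?thesis by blast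
  qed
  have inj: "inj_on (\<lambda>(a,b). d*a+b) (SS d)"
  proof (rule inj_onI)
    fix x y assume xy: "x \<in> SS d" "y \<in> SS d" "(\<lambda>(a,b). d*a+b) x = (\<lambda>(a,b). d*a+b) y"
    obtain a b a' b' where x: "x = (a,b)" and y: "y = (a',b')" by (cases x, cases y) blast
    have "b < d" "b' < d" "d*a+b = d*a'+b'" using xy unfolding x y by simp_all
    then have "a = a' \<and> b = b'" by (rule aux)
    then show "x = y" unfolding x y by simp
  qed
  have img: "{..<d*d} = (\<lambda>(a,b). d*a+b) ` SS d"
  proof (intro equalityI subsetI)
    fix r assume "r \<in> {..<d*d}"
    then have lt: "r div d < d" "r mod d < d" using assms
      by (auto simp: div_less_iff_less_mult mult.commute)
    show "r \<in> (\<lambda>(a,b). d*a+b) ` SS d"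
    proof (rule image_eqI[of _ _ "(r div d, r mod d)"])
      show "r = (\<lambda>(a,b). d*a+b) (r div d, r mod d)" by simp
      show "(r div d, r mod d) \<in> SS d" using lt by simp
    qed
  next
    fix r assume "r \<in> (\<lambda>(a,b). d*a+b) ` SS d"
    then obtain a b where r: "r = d*a+b" "a < d" "b < d" by auto
    have "d*a + b < d*a + d" using r by simp
    also have "\<dots> = d*(a+1)" by simp
    also have "\<dots> \<le> d*d" using r by (intro mult_le_mono2) simp
    finally show "r \<in> {..<d*d}" using r by simp
  qed
  have "(\<Sum>r<d*d. f r) = sum (f \<circ> (\<lambda>(a,b). d*a+b)) (SS d)"
    unfolding img by (rule sum.reindex[OF inj])
  then show ?thesis by (simp add: sum.cartesian_product split_def)
qed

definition Psi :: "cmat \<Rightarrow> cmat \<Rightarrow> cmat \<Rightarrow> cmat \<Rightarrow> nat\<times>nat \<Rightarrow> nat\<times>nat \<Rightarrow> complex" where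
  "Psi X Y U V p q = X (fst p) (fst q) * U (snd p) (snd q) + Y (fst p) (fst q) * V (snd p) (snd q)"

lemma frobN: assumes "0 < d"
  shows "frob_sq (d*d) (madd (kron d X U) (kron d Y V)) = NN d (Psi X Y U V)"
proof -
  have dm: "(d*a+b) div d = a" "(d*a+b) mod d = b" if "b < d" for a b using that assms by simp_all
  show ?thesis
    unfolding frob_sq_def NN_def sum_SS sum_dd[OF assms]
    by (simp add: dm madd_def kron_def Psi_def)
qed

lemma frobB1: "frob_sq d (madd (mmult d (mtrans X) U) (mmult d (mtrans Y) V)) = B1 d (Psi X Y U V)"
  unfolding frob_sq_def B1_def sum_SS
  by (simp add: madd_def mmult_def mtrans_def Psi_def sum.distrib)

lemma frobB2: "frob_sq d (madd (mmult d U (mtrans X)) (mmult d V (mtrans Y))) = B2 d (Psi X Y U V)"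
  unfolding frob_sq_def B2_def sum_SS
  by (subst sum.swap) (simp add: madd_def mmult_def mtrans_def Psi_def sum.distrib mult.commute)

lemma frobC: "(cmod (mtrace d (madd (mmult d (mtrans X) U) (mmult d (mtrans Y) V))))\<^sup>2 = CC d (Psi X Y U V)"
proof -
  have "(\<Sum>i<d. madd (mmult d (mtrans X) U) (mmult d (mtrans Y) V) i i) = (\<Sum>i<d. \<Sum>m<d. Psi X Y U V (m,m) (i,i))"
    by (simp add: madd_def mmult_def mtrans_def Psi_def sum.distrib)
  also have "\<dots> = (\<Sum>k<d. \<Sum>l<d. Psi X Y U V (k, k) (l, l))" by (rule sum.swap)
  finally show ?thesis unfolding mtrace_def CC_def by simp
qed

lemma sum_if_const: "(\<Sum>q\<in>A. if P then f q else 0) = (if P then sum f A else 0)"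
  by simp

lemma instA:
  assumes "2 \<le> d"
  shows "NN d (\<lambda>p q'. if q' = (0,1) then m p else 0) = (\<Sum>p\<in>SS d. (cmod (m p))\<^sup>2)"
    and "B1 d (\<lambda>p q'. if q' = (0,1) then m p else 0) = (cmod (\<Sum>k<d. m (k,k)))\<^sup>2"
    and "B2 d (\<lambda>p q'. if q' = (0,1) then m p else 0) = 0"
    and "CC d (\<lambda>p q'. if q' = (0,1) then m p else 0) = 0"
proof -
  have mem: "(0::nat,Suc 0) \<in> SS d" using assms by auto
  have d1: "Suc 0 < d" using assms by simp
  have e: "(\<Sum>q'\<in>SS d. (cmod (if q' = (0,1) then z else 0))\<^sup>2) = (cmod z)\<^sup>2" for z
    using mem by (simp add: if_distrib[of "\<lambda>x. (cmod x)\<^sup>2"] sum.delta cong: if_cong)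
  show "NN d (\<lambda>p q'. if q' = (0,1) then m p else 0) = (\<Sum>p\<in>SS d. (cmod (m p))\<^sup>2)"
    unfolding NN_def e ..
  have e2: "(\<Sum>q'\<in>SS d. (if q' = (0,1) then z else 0)) = z" for z :: complex
    using mem by simp
  show "B1 d (\<lambda>p q'. if q' = (0,1) then m p else 0) = (cmod (\<Sum>k<d. m (k,k)))\<^sup>2"
    unfolding B1_def by (simp add: sum_if_const if_distrib[of "\<lambda>x. (cmod x)\<^sup>2"] sum.delta mem d1 cong: if_cong)
  show "B2 d (\<lambda>p q'. if q' = (0,1) then m p else 0) = 0"
    unfolding B2_def by (simp cong: conj_cong)
  show "CC d (\<lambda>p q'. if q' = (0,1) then m p else 0) = 0"
    unfolding CC_def by (simp cong: conj_cong)
qed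

lemma instB:
  assumes "2 \<le> d"
  shows "NN d (\<lambda>p' q. if p' = (0,1) then m q else 0) = (\<Sum>q\<in>SS d. (cmod (m q))\<^sup>2)"
    and "B2 d (\<lambda>p' q. if p' = (0,1) then m q else 0) = (cmod (\<Sum>k<d. m (k,k)))\<^sup>2"
    and "B1 d (\<lambda>p' q. if p' = (0,1) then m q else 0) = 0"
    and "CC d (\<lambda>p' q. if p' = (0,1) then m q else 0) = 0"
proof -
  have mem: "(0::nat,Suc 0) \<in> SS d" using assms by auto
  have d1: "Suc 0 < d" using assms by simp
  show "NN d (\<lambda>p' q. if p' = (0,1) then m q else 0) = (\<Sum>q\<in>SS d. (cmod (m q))\<^sup>2)"
    unfolding NN_def by (simp add: sum_if_const if_distrib[of "\<lambda>x. (cmod x)\<^sup>2"] sum.delta mem d1 cong: if_cong)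
  show "B2 d (\<lambda>p' q. if p' = (0,1) then m q else 0) = (cmod (\<Sum>k<d. m (k,k)))\<^sup>2"
    unfolding B2_def by (simp add: sum_if_const if_distrib[of "\<lambda>x. (cmod x)\<^sup>2"] sum.delta mem d1 cong: if_cong)
  show "B1 d (\<lambda>p' q. if p' = (0,1) then m q else 0) = 0"
    unfolding B1_def by (simp cong: conj_cong)
  show "CC d (\<lambda>p' q. if p' = (0,1) then m q else 0) = 0"
    unfolding CC_def by (simp cong: conj_cong)
qed

lemma bounds:
  assumes H: "\<And>X Y U V. 0 \<le> NN d (Psi X Y U V) - 1/2 * B1 d (Psi X Y U V) - 1/2 * B2 d (Psi X Y U V) + 1/4 * CC d (Psi X Y U V)"
    and d: "2 \<le> d"
  shows "B1 d (Psi X Y U V) \<le> 2 * NN d (Psi X Y U V)" and "B2 d (Psi X Y U V) \<le> 2 * NN d (Psi X Y U V)"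
proof -
  let ?\<psi> = "Psi X Y U V"
  have "(cmod (\<Sum>k<d. ?\<psi> (k,k) q))\<^sup>2 \<le> 2 * (\<Sum>p\<in>SS d. (cmod (?\<psi> p q))\<^sup>2)" for q
  proof -
    obtain a2 b2 where q: "q = (a2,b2)" by (cases q)
    define X' :: cmat where "X' i j = (if j = 0 then X i a2 else 0)" for i j
    define Y' :: cmat where "Y' i j = (if j = 0 then Y i a2 else 0)" for i j
    define U' :: cmat where "U' i j = (if j = 1 then U i b2 else 0)" for i j
    define V' :: cmat where "V' i j = (if j = 1 then V i b2 else 0)" for i j
    have e: "Psi X' Y' U' V' = (\<lambda>p q'. if q' = (0,1) then ?\<psi> p q else 0)"
      by (auto simp: fun_eq_iff Psi_def X'_def Y'_def U'_def V'_def q)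
    from H[of X' Y' U' V'] show ?thesis unfolding e instA[OF d] by simp
  qed
  then have "B1 d ?\<psi> \<le> (\<Sum>q\<in>SS d. 2 * (\<Sum>p\<in>SS d. (cmod (?\<psi> p q))\<^sup>2))"
    unfolding B1_def by (intro sum_mono) 
  also have "\<dots> = 2 * NN d ?\<psi>" unfolding NN_def sum_distrib_left[symmetric] by (subst sum.swap) simp
  finally show "B1 d ?\<psi> \<le> 2 * NN d ?\<psi>" .
  have "(cmod (\<Sum>k<d. ?\<psi> p (k,k)))\<^sup>2 \<le> 2 * (\<Sum>q\<in>SS d. (cmod (?\<psi> p q))\<^sup>2)" for p
  proof -
    obtain a1 b1 where p: "p = (a1,b1)" by (cases p)
    define X' :: cmat where "X' i j = (if i = 0 then X a1 j else 0)" for i j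
    define Y' :: cmat where "Y' i j = (if i = 0 then Y a1 j else 0)" for i j
    define U' :: cmat where "U' i j = (if i = 1 then U b1 j else 0)" for i j
    define V' :: cmat where "V' i j = (if i = 1 then V b1 j else 0)" for i j
    have e: "Psi X' Y' U' V' = (\<lambda>p' q. if p' = (0,1) then ?\<psi> p q else 0)"
      by (auto simp: fun_eq_iff Psi_def X'_def Y'_def U'_def V'_def p)
    from H[of X' Y' U' V'] show ?thesis unfolding e instB[OF d] by simp
  qed
  then have "B2 d ?\<psi> \<le> (\<Sum>p\<in>SS d. 2 * (\<Sum>q\<in>SS d. (cmod (?\<psi> p q))\<^sup>2))"
    unfolding B2_def by (intro sum_mono) 
  also have "\<dots> = 2 * NN d ?\<psi>" unfolding NN_def sum_distrib_left[symmetric] by simp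
  finally show "B2 d ?\<psi> \<le> 2 * NN d ?\<psi>" .
qed

lemma psi_idx: fixes \<alpha> \<beta> :: "nat \<Rightarrow> nat list \<Rightarrow> complex" assumes "\<forall>x\<in>idx d 2. \<psi> x = (\<Sum>m<2. \<alpha> m (map fst x) * \<beta> m (map snd x))"
  shows "\<And>p q. p \<in> SS d \<Longrightarrow> q \<in> SS d \<Longrightarrow> \<psi> [p,q] =
     Psi (\<lambda>i j. \<alpha> 0 [i,j]) (\<lambda>i j. \<alpha> 1 [i,j]) (\<lambda>i j. \<beta> 0 [i,j]) (\<lambda>i j. \<beta> 1 [i,j]) p q"
proof -
  fix p q assume "p \<in> SS d" "q \<in> SS d"
  then have "[p,q] \<in> idx d 2" unfolding idx2 by auto
  with assms show "\<psi> [p,q] = Psi (\<lambda>i j. \<alpha> 0 [i,j]) (\<lambda>i j. \<alpha> 1 [i,j]) (\<lambda>i j. \<beta> 0 [i,j]) (\<lambda>i j. \<beta> 1 [i,j]) p q"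
    by (simp add: Psi_def numeral_2_eq_2)
qed

theorem proposition3p2:
  fixes d :: nat
  assumes "d \<ge> 3"
  shows "(\<forall>t::real. 1 / real d < t \<and> t \<le> 1/2 \<longrightarrow> \<not> k_distillable d 2 (werner t))
    \<longleftrightarrow>
    (\<forall>X Y U V :: cmat.
       frob_sq (d*d) (madd (kron d X U) (kron d Y V))
       - 1/2 * frob_sq d (madd (mmult d (mtrans X) U) (mmult d (mtrans Y) V))
       - 1/2 * frob_sq d (madd (mmult d U (mtrans X)) (mmult d V (mtrans Y)))
       + 1/4 * (cmod (mtrace d (madd (mmult d (mtrans X) U) (mmult d (mtrans Y) V))))\<^sup>2
       \<ge> 0)"
proof -
  have d0: "0 < d" and d2: "2 \<le> d" using assms by auto
  have frob: "frob_sq (d*d) (madd (kron d X U) (kron d Y V))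
       - 1/2 * frob_sq d (madd (mmult d (mtrans X) U) (mmult d (mtrans Y) V))
       - 1/2 * frob_sq d (madd (mmult d U (mtrans X)) (mmult d V (mtrans Y)))
       + 1/4 * (cmod (mtrace d (madd (mmult d (mtrans X) U) (mmult d (mtrans Y) V))))\<^sup>2
     = NN d (Psi X Y U V) - 1/2 * B1 d (Psi X Y U V) - 1/2 * B2 d (Psi X Y U V) + 1/4 * CC d (Psi X Y U V)"
    for X Y U V
    by (simp only: frobN[OF d0] frobB1 frobB2 frobC)
  show ?thesis
  proof
    assume L: "\<forall>t::real. 1 / real d < t \<and> t \<le> 1/2 \<longrightarrow> \<not> k_distillable d 2 (werner t)"
    have "1 / real d < 1/2" using assms by (simp add: divide_simps)
    with L have nd: "\<not> k_distillable d 2 (werner (1/2))" by auto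
    show "\<forall>X Y U V :: cmat. frob_sq (d*d) (madd (kron d X U) (kron d Y V))
       - 1/2 * frob_sq d (madd (mmult d (mtrans X) U) (mmult d (mtrans Y) V))
       - 1/2 * frob_sq d (madd (mmult d U (mtrans X)) (mmult d V (mtrans Y)))
       + 1/4 * (cmod (mtrace d (madd (mmult d (mtrans X) U) (mmult d (mtrans Y) V))))\<^sup>2
       \<ge> 0"
    proof (intro allI)
      fix X Y U V :: cmat
      define \<psi> where "\<psi> x = Psi X Y U V (x!0) (x!1)" for x :: "(nat\<times>nat) list"
      define \<alpha> :: "nat \<Rightarrow> nat list \<Rightarrow> complex" where "\<alpha> m xs = (if m = 0 then X else Y) (xs!0) (xs!1)" for m xs
      define \<beta> :: "nat \<Rightarrow> nat list \<Rightarrow> complex" where "\<beta> m xs = (if m = 0 then U else V) (xs!0) (xs!1)" for m xs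
      have sr: "schmidt_rank_le d 2 2 \<psi>"
        unfolding schmidt_rank_le_def
      proof (intro exI ballI)
        fix x assume "x \<in> idx d 2"
        then obtain p q where "x = [p,q]" unfolding idx2 by auto
        then show "\<psi> x = (\<Sum>m<2. \<alpha> m (map fst x) * \<beta> m (map snd x))"
          by (simp add: \<psi>_def \<alpha>_def \<beta>_def Psi_def numeral_2_eq_2)
      qed
      have q: "tensor_power_form d 2 (ptrans (werner (1/2))) \<psi> = complex_of_real (NN d (Psi X Y U V) - 1/2 * B1 d (Psi X Y U V) - 1/2 * B2 d (Psi X Y U V) + (1/2)\<^sup>2 * CC d (Psi X Y U V))"
        by (rule key) (simp add: \<psi>_def)
      have im: "Im (tensor_power_form d 2 (ptrans (werner (1/2))) \<psi>) = 0" unfolding q by simp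
      from nd sr im have "\<not> (Re (tensor_power_form d 2 (ptrans (werner (1/2))) \<psi>) < 0)"
        unfolding k_distillable_def Let_def by blast
      then show "frob_sq (d*d) (madd (kron d X U) (kron d Y V))
       - 1/2 * frob_sq d (madd (mmult d (mtrans X) U) (mmult d (mtrans Y) V))
       - 1/2 * frob_sq d (madd (mmult d U (mtrans X)) (mmult d V (mtrans Y)))
       + 1/4 * (cmod (mtrace d (madd (mmult d (mtrans X) U) (mmult d (mtrans Y) V))))\<^sup>2 \<ge> 0"
        unfolding frob q by (simp add: power2_eq_square)
    qed
  next
    assume R: "\<forall>X Y U V :: cmat. frob_sq (d*d) (madd (kron d X U) (kron d Y V))
       - 1/2 * frob_sq d (madd (mmult d (mtrans X) U) (mmult d (mtrans Y) V))
       - 1/2 * frob_sq d (madd (mmult d U (mtrans X)) (mmult d V (mtrans Y)))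
       + 1/4 * (cmod (mtrace d (madd (mmult d (mtrans X) U) (mmult d (mtrans Y) V))))\<^sup>2
       \<ge> 0"
    have H: "0 \<le> NN d (Psi X Y U V) - 1/2 * B1 d (Psi X Y U V) - 1/2 * B2 d (Psi X Y U V) + 1/4 * CC d (Psi X Y U V)" for X Y U V
      using R frob by metis
    show "\<forall>t::real. 1 / real d < t \<and> t \<le> 1/2 \<longrightarrow> \<not> k_distillable d 2 (werner t)"
    proof (intro allI impI notI)
      fix t :: real assume t: "1 / real d < t \<and> t \<le> 1/2" and kd: "k_distillable d 2 (werner t)"
      have t0: "0 < t" using t d0 by (smt (verit) divide_pos_pos of_nat_0_less_iff)
      from kd obtain \<psi> and \<alpha> \<beta> :: "nat \<Rightarrow> nat list \<Rightarrow> complex" where sr: "\<forall>x\<in>idx d 2. \<psi> x = (\<Sum>m<2. \<alpha> m (map fst x) * \<beta> m (map snd x))"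
        and neg: "Re (tensor_power_form d 2 (ptrans (werner t)) \<psi>) < 0"
        unfolding k_distillable_def schmidt_rank_le_def Let_def by blast
      define X :: cmat where "X = (\<lambda>i j. \<alpha> 0 [i,j])"
      define Y :: cmat where "Y = (\<lambda>i j. \<alpha> 1 [i,j])"
      define U :: cmat where "U = (\<lambda>i j. \<beta> 0 [i,j])"
      define V :: cmat where "V = (\<lambda>i j. \<beta> 1 [i,j])"
      let ?\<phi> = "Psi X Y U V"
      have q: "tensor_power_form d 2 (ptrans (werner t)) \<psi> = complex_of_real (NN d ?\<phi> - t * B1 d ?\<phi> - t * B2 d ?\<phi> + t\<^sup>2 * CC d ?\<phi>)"
        using psi_idx[OF sr] unfolding X_def Y_def U_def V_def by (rule key)
      have b1: "B1 d ?\<phi> \<le> 2 * NN d ?\<phi>" and b2: "B2 d ?\<phi> \<le> 2 * NN d ?\<phi>" using bounds[OF H d2] by auto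
      have h: "0 \<le> NN d ?\<phi> - 1/2 * B1 d ?\<phi> - 1/2 * B2 d ?\<phi> + 1/4 * CC d ?\<phi>" by (rule H)
      have iden: "NN d ?\<phi> - t * B1 d ?\<phi> - t * B2 d ?\<phi> + t\<^sup>2 * CC d ?\<phi> =
        (1-2*t)\<^sup>2 * NN d ?\<phi> + 2*t*(1-2*t) * (2 * NN d ?\<phi> - 1/2 * B1 d ?\<phi> - 1/2 * B2 d ?\<phi>)
        + 4*t\<^sup>2 * (NN d ?\<phi> - 1/2 * B1 d ?\<phi> - 1/2 * B2 d ?\<phi> + 1/4 * CC d ?\<phi>)"
        by (simp add: algebra_simps power2_eq_square)
      have nn: "0 \<le> NN d ?\<phi>" unfolding NN_def by (intro sum_nonneg) simp
      have "0 \<le> (1-2*t)\<^sup>2 * NN d ?\<phi> + 2*t*(1-2*t) * (2 * NN d ?\<phi> - 1/2 * B1 d ?\<phi> - 1/2 * B2 d ?\<phi>)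
        + 4*t\<^sup>2 * (NN d ?\<phi> - 1/2 * B1 d ?\<phi> - 1/2 * B2 d ?\<phi> + 1/4 * CC d ?\<phi>)"
      proof -
        have a1: "0 \<le> (1-2*t)\<^sup>2 * NN d ?\<phi>" using nn by simp
        have a2: "0 \<le> 2*t*(1-2*t) * (2 * NN d ?\<phi> - 1/2 * B1 d ?\<phi> - 1/2 * B2 d ?\<phi>)"
          using t t0 b1 b2 by (intro mult_nonneg_nonneg) auto
        have a3: "0 \<le> 4*t\<^sup>2 * (NN d ?\<phi> - 1/2 * B1 d ?\<phi> - 1/2 * B2 d ?\<phi> + 1/4 * CC d ?\<phi>)"
          using h by simp
        show ?thesis using a1 a2 a3 by linarith
      qed
      with neg show False unfolding q iden by simp
    qed
  qed
qed

end
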